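(* Let $q>n$ and let $\Theta:C\setminus\{o\}\to(0,\infty)$ be continuous and positively homogeneous of degree $-q$. Let $\mathbb{A}$ be a $C$-asymptotic set and $z\in C\setminus\{o\}$. Then there exists a constant $M>0$ depending only on $C,\Theta,\mathbb{A},z$ such that $T_\Theta(\mathbb{A},tz)\le M\,t^{n-q-1}$ for all sufficiently large $t$. Consequently $T_\Theta(\mathbb{A},tz)=o(t^{n-q})$ as $t\to+\infty$.
   Context: $C\subset\mathbb{R}^n$ ($n\ge2$) is a pointed closed convex cone with nonempty interior. A $C$-asymptotic set is an unbounded closed convex set $\mathbb{A}\subset C$ with nonempty interior and $o\notin\mathbb{A}$ such that $\lim_{x\in\partial\mathbb{A},|x|\to\infty}d(x,\partial C)=0$. $T_\Theta(\mathbb{A},z)=\int_{(z+C)\setminus(z+\mathbb{A})}\Theta\,d\mathcal{H}^n$. *)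

theory Defs
  imports "HOL-Analysis.Analysis" "HOL-Library.Landau_Symbols"
begin

definition pointed_cone :: "'a::euclidean_space set \<Rightarrow> bool" where
  "pointed_cone C \<longleftrightarrow> cone C \<and> convex C \<and> closed C \<and> interior C \<noteq> {} \<and>
     C \<inter> uminus ` C = {0}"

definition C_asymptotic :: "'a::euclidean_space set \<Rightarrow> 'a set \<Rightarrow> bool" where
  "C_asymptotic C A \<longleftrightarrow> A \<subseteq> C \<and> closed A \<and> convex A \<and> \<not> bounded A \<and>
     interior A \<noteq> {} \<and> 0 \<notin> A \<and>
     (\<forall>\<epsilon>>0. \<exists>R. \<forall>x\<in>frontier A. norm x > R \<longrightarrow> infdist x (frontier C) < \<epsilon>)"

text \<open>T_Theta(A,z) = integral of Theta over (z+C) \ (z+A) w.r.t. n-dim Hausdorff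
  (= Lebesgue) measure; as a nonnegative (possibly infinite) integral.\<close>
definition T_Theta :: "'a::euclidean_space set \<Rightarrow> ('a \<Rightarrow> real) \<Rightarrow> 'a set \<Rightarrow> 'a \<Rightarrow> ennreal" where
  "T_Theta C \<Theta> A z = (\<integral>\<^sup>+ x. indicator (((+) z ` C) - ((+) z ` A)) x * ennreal (\<Theta> x) \<partial>lebesgue)"

end

theory Submission
  imports Defs "HOL-Library.Landau_Symbols"
begin


lemma pc_basic:
  fixes C :: "'a::euclidean_space set"
  assumes "pointed_cone C"
  shows "0 \<in> C" "0 \<notin> interior C" "\<And>x y. x \<in> C \<Longrightarrow> y \<in> C \<Longrightarrow> x + y \<in> C"
    "\<And>x c. x \<in> C \<Longrightarrow> c \<ge> 0 \<Longrightarrow> c *\<^sub>R x \<in> C" "closed C" "convex C"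
    "\<And>x. x \<in> C \<Longrightarrow> -x \<in> C \<Longrightarrow> x = 0"
proof -
  have cone: "cone C" and cv: "convex C" and cl: "closed C" and ne: "interior C \<noteq> {}"
    and pt: "C \<inter> uminus ` C = {0}" using assms by (auto simp: pointed_cone_def)
  show sc: "\<And>x c. x \<in> C \<Longrightarrow> c \<ge> 0 \<Longrightarrow> c *\<^sub>R x \<in> C" using cone by (auto simp: cone_def)
  obtain p where "p \<in> C" using ne interior_subset by blast
  from sc[OF this, of 0] show z: "0 \<in> C" by simp
  show "closed C" "convex C" by fact+
  show neg: "\<And>x. x \<in> C \<Longrightarrow> -x \<in> C \<Longrightarrow> x = 0"
  proof -
    fix x assume "x \<in> C" "-x \<in> C"
    then have "x \<in> C \<inter> uminus ` C" by (auto intro: image_eqI[of _ _ "-x"])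
    then show "x = 0" using pt by auto
  qed
  show add: "\<And>x y. x \<in> C \<Longrightarrow> y \<in> C \<Longrightarrow> x + y \<in> C"
  proof -
    fix x y assume "x \<in> C" "y \<in> C"
    then have "(1/2) *\<^sub>R x + (1/2) *\<^sub>R y \<in> C" using cv by (auto simp: convex_def)
    from sc[OF this, of 2] show "x + y \<in> C" by (simp add: scaleR_add_right)
  qed
  show "0 \<notin> interior C"
  proof
    assume "0 \<in> interior C"
    then obtain e where e: "e > 0" "ball 0 e \<subseteq> C" using open_contains_ball interior_subset
      by (metis open_interior subset_trans)
    obtain b :: 'a where b: "b \<in> Basis" using nonempty_Basis by blast
    let ?x = "(e/2) *\<^sub>R b"
    have "?x \<in> ball 0 e" "-?x \<in> ball 0 e" using e b by (auto simp: norm_Basis)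
    then have "?x = 0" using neg e by blast
    then show False using e b by (auto simp: nonzero_Basis)
  qed
qed

lemma pc_frontier_dist:
  fixes C :: "'a::euclidean_space set"
  assumes "pointed_cone C" "r > 0" "ball p r \<subseteq> C"
  shows "infdist p (frontier C) \<ge> r" "norm p \<ge> r"
proof -
  have z: "0 \<in> frontier C" using pc_basic[OF assms(1)]
    by (simp add: frontier_def closure_closed)
  have ne_f: "frontier C \<noteq> {}" using z by blast
  have bi: "ball p r \<subseteq> interior C" using assms(3) interior_maximal by blast
  have d: "dist p a \<ge> r" if "a \<in> frontier C" for a
  proof (rule ccontr)
    assume "\<not> r \<le> dist p a"
    then have "a \<in> interior C" using bi by auto
    then show False using that by (simp add: frontier_def)
  qed
  show "infdist p (frontier C) \<ge> r"
    using d z unfolding infdist_notempty[of "frontier C", OF ne_f]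
    by (intro cINF_greatest) auto
  show "norm p \<ge> r" using d[OF z] by simp
qed

lemma pc_nonzero:
  fixes C :: "'a::euclidean_space set"
  assumes "pointed_cone C"
  obtains p where "p \<in> C" "p \<noteq> 0"
proof -
  have "interior C \<noteq> {}" using assms by (simp add: pointed_cone_def)
  then obtain p where "p \<in> interior C" by blast
  then have "p \<in> C" "p \<noteq> 0" using pc_basic(2)[OF assms] interior_subset by auto
  then show ?thesis using that by blast
qed

lemma pc_c0:
  fixes C :: "'a::euclidean_space set"
  assumes pc: "pointed_cone C"
  shows "\<exists>c0>0. \<forall>u\<in>C. \<forall>v\<in>C. c0 * (norm u + norm v) \<le> norm (u + v)"
proof -
  note B = pc_basic[OF pc]
  define K where "K = ((cball 0 1 \<inter> C) \<times> (cball 0 1 \<inter> C)) \<inter> {p. norm (fst p) + norm (snd p) = 1}"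
  have cK: "compact K" unfolding K_def
    by (intro compact_Int_closed compact_Times compact_Int_closed B closed_Collect_eq
        continuous_intros compact_cball)
  obtain p where p: "p \<in> C" "p \<noteq> 0" using pc_nonzero[OF pc] by blast
  have "(p /\<^sub>R norm p, 0) \<in> K" using p B(1) B(4)[OF p(1), of "1/norm p"] by (auto simp: K_def divide_inverse_commute)
  then have neK: "K \<noteq> {}" by blast
  have "continuous_on K (\<lambda>p. norm (fst p + snd p))" by (intro continuous_intros)
  from continuous_attains_inf[OF cK neK this] obtain w where w: "w \<in> K"
    and wmin: "\<And>y. y \<in> K \<Longrightarrow> norm (fst w + snd w) \<le> norm (fst y + snd y)" by blast
  define c0 where "c0 = norm (fst w + snd w)"
  have c0pos: "c0 > 0"
  proof (rule ccontr)
    assume "\<not> c0 > 0"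
    then have "fst w + snd w = 0" unfolding c0_def by simp
    then have "fst w = - snd w" by (simp add: eq_neg_iff_add_eq_0)
    moreover have "fst w \<in> C" "snd w \<in> C" using w by (auto simp: K_def)
    ultimately have "fst w = 0" using B(7) by auto
    then have "snd w = 0" using \<open>fst w = - snd w\<close> by simp
    then show False using w \<open>fst w = 0\<close> by (auto simp: K_def)
  qed
  have "c0 * (norm u + norm v) \<le> norm (u + v)" if u: "u \<in> C" and v: "v \<in> C" for u v
  proof (cases "norm u + norm v = 0")
    case True then show ?thesis by simp
  next
    case False
    define s where "s = norm u + norm v"
    have s: "s > 0" using False s_def by (simp add: add_pos_nonneg order_le_neq_trans)
    have nu: "norm u \<le> s" "norm v \<le> s" by (auto simp: s_def)
    have "(u /\<^sub>R s, v /\<^sub>R s) \<in> K" using B(4)[OF u, of "1/s"] B(4)[OF v, of "1/s"] s nu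
      by (auto simp: K_def divide_simps s_def[symmetric] add_divide_distrib[symmetric])
    from wmin[OF this] have "c0 \<le> norm (u /\<^sub>R s + v /\<^sub>R s)" by (simp add: c0_def)
    also have "\<dots> = norm (u + v) / s" using s by (simp add: scaleR_add_right[symmetric] divide_inverse_commute)
    finally show ?thesis using s by (simp add: s_def[symmetric] field_simps)
  qed
  then show ?thesis using c0pos by blast
qed

lemma asym_translate:
  fixes C A :: "'a::euclidean_space set"
  assumes pc: "pointed_cone C" and asy: "C_asymptotic C A"
  shows "\<exists>a. (+) a ` C \<subseteq> A"
proof -
  note B = pc_basic[OF pc]
  obtain c0 where c0: "c0 > 0" "\<And>u v. u \<in> C \<Longrightarrow> v \<in> C \<Longrightarrow> c0 * (norm u + norm v) \<le> norm (u + v)"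
    using pc_c0[OF pc] by blast
  have AC: "A \<subseteq> C" and clA: "closed A" and cvA: "convex A" and ub: "\<not> bounded A"
    and intA: "interior A \<noteq> {}"
    and cond: "\<And>\<epsilon>. \<epsilon> > 0 \<Longrightarrow> \<exists>R. \<forall>x\<in>frontier A. norm x > R \<longrightarrow> infdist x (frontier C) < \<epsilon>"
    using asy by (auto simp: C_asymptotic_def)
  obtain a0 where "a0 \<in> interior A" using intA by blast
  then obtain \<rho> where \<rho>: "\<rho> > 0" "ball a0 \<rho> \<subseteq> A" by (meson mem_interior)
  define \<epsilon> where "\<epsilon> = \<rho> / 2"
  have \<epsilon>: "\<epsilon> > 0" using \<rho> by (simp add: \<epsilon>_def)
  obtain R where R: "\<And>x. x \<in> frontier A \<Longrightarrow> norm x > R \<Longrightarrow> infdist x (frontier C) < \<epsilon>"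
    using cond[OF \<epsilon>] by blast
  obtain b where b: "b \<in> A" "norm b > 2 * \<bar>R\<bar> / c0 + norm a0"
    using ub unfolding bounded_iff by (meson not_le)
  define a1 where "a1 = (1/2) *\<^sub>R (a0 + b)"
  have ball1: "ball a1 \<epsilon> \<subseteq> A"
  proof
    fix w assume w: "w \<in> ball a1 \<epsilon>"
    define x where "x = 2 *\<^sub>R w - b"
    have "x - a0 = 2 *\<^sub>R (w - a1)" by (simp add: x_def a1_def algebra_simps)
    then have "norm (x - a0) = 2 * norm (w - a1)" by simp
    then have "dist a0 x < \<rho>" using w by (simp add: dist_norm \<epsilon>_def norm_minus_commute)
    then have "x \<in> A" using \<rho> by auto
    then have "(1/2) *\<^sub>R x + (1/2) *\<^sub>R b \<in> A" using b(1) cvA by (auto simp: convex_def)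
    moreover have "(1/2) *\<^sub>R x + (1/2) *\<^sub>R b = w" by (simp add: x_def algebra_simps)
    ultimately show "w \<in> A" by simp
  qed
  have "norm b \<le> norm (2 *\<^sub>R a1) + norm a0"
    using norm_triangle_ineq4[of "2 *\<^sub>R a1" a0] by (simp add: a1_def)
  then have "2 * norm a1 \<ge> norm b - norm a0" by simp
  then have "norm a1 > \<bar>R\<bar> / c0" using b(2) by linarith
  then have na1: "c0 * norm a1 > R" using c0(1) by (simp add: field_simps)
  have "a1 + c \<in> A" if c: "c \<in> C" for c
  proof (rule ccontr)
    assume nA: "a1 + c \<notin> A"
    have "a1 \<in> A" using ball1 \<epsilon> by auto
    have "closed_segment a1 (a1 + c) \<inter> frontier A \<noteq> {}"
      by (rule connected_Int_frontier) (use nA \<open>a1 \<in> A\<close> in auto)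
    then obtain p where p: "p \<in> closed_segment a1 (a1 + c)" "p \<in> frontier A" by blast
    then obtain u where u: "0 \<le> u" "u \<le> 1" "p = (1 - u) *\<^sub>R a1 + u *\<^sub>R (a1 + c)"
      by (auto simp: closed_segment_def)
    have pe: "p = a1 + u *\<^sub>R c" using u(3) by (simp add: algebra_simps)
    have uc: "u *\<^sub>R c \<in> C" using B(4)[OF c u(1)] .
    have "ball p \<epsilon> \<subseteq> C"
    proof
      fix y assume "y \<in> ball p \<epsilon>"
      then have "y - u *\<^sub>R c \<in> ball a1 \<epsilon>" by (simp add: pe dist_norm algebra_simps)
      then have "y - u *\<^sub>R c \<in> C" using ball1 AC by auto
      from B(3)[OF this uc] show "y \<in> C" by simp
    qed
    then have d: "infdist p (frontier C) \<ge> \<epsilon>" using pc_frontier_dist[OF pc \<epsilon>] by blast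
    have "a1 \<in> C" using \<open>a1 \<in> A\<close> AC by auto
    have "norm p \<ge> c0 * (norm a1 + norm (u *\<^sub>R c))" using c0(2)[OF \<open>a1 \<in> C\<close> uc] pe by simp
    moreover have "c0 * (norm a1 + norm (u *\<^sub>R c)) \<ge> c0 * norm a1" using c0(1) by simp
    ultimately have "norm p > R" using na1 by linarith
    from R[OF p(2) this] d show False by simp
  qed
  then show ?thesis by blast
qed



lemma pow_diff_le:
  fixes x y :: real
  assumes "0 \<le> y" "y \<le> x"
  shows "x ^ Suc m - y ^ Suc m \<le> real (Suc m) * x ^ m * (x - y)"
proof (induction m)
  case 0 then show ?case by simp
next
  case (Suc m)
  have e: "x ^ Suc (Suc m) - y ^ Suc (Suc m) = x * (x ^ Suc m - y ^ Suc m) + y ^ Suc m * (x - y)"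
    by (simp add: algebra_simps)
  have "x * (x ^ Suc m - y ^ Suc m) \<le> x * (real (Suc m) * x ^ m * (x - y))"
    using Suc assms by (intro mult_left_mono) auto
  moreover have "y ^ Suc m * (x - y) \<le> x ^ Suc m * (x - y)"
    using assms by (intro mult_right_mono power_mono) auto
  ultimately show ?case unfolding e by (simp add: algebra_simps)
qed

lemma lebesgue_eq_lborel_emeasure:
  assumes "X \<in> sets borel"
  shows "emeasure lebesgue X = emeasure lborel X"
proof -
  have "emeasure lebesgue X = (\<integral>\<^sup>+x. indicator X x \<partial>lebesgue)"
    using assms by (simp add: nn_integral_indicator)
  also have "\<dots> = (\<integral>\<^sup>+x. indicator X x \<partial>lborel)"
    by (simp add: nn_integral_completion)
  also have "\<dots> = emeasure lborel X" using assms by (simp add: nn_integral_indicator)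
  finally show ?thesis .
qed

lemma cone_ball_measure:
  fixes C :: "'a::euclidean_space set"
  assumes pc: "pointed_cone C" and r: "r > 0"
  shows "measure lebesgue (C \<inter> cball 0 r) = r ^ DIM('a) * measure lebesgue (C \<inter> cball 0 1)"
proof -
  note B = pc_basic[OF pc]
  have "C \<inter> cball 0 r = (\<lambda>x. r *\<^sub>R x + 0) ` (C \<inter> cball 0 1)"
  proof
    show "C \<inter> cball 0 r \<subseteq> (\<lambda>x. r *\<^sub>R x + 0) ` (C \<inter> cball 0 1)"
    proof
      fix y assume y: "y \<in> C \<inter> cball 0 r"
      have "(1/r) *\<^sub>R y \<in> C \<inter> cball 0 1" using y r B(4)[of y "1/r"] by (auto simp: field_simps)
      moreover have "y = r *\<^sub>R ((1/r) *\<^sub>R y) + 0" using r by simp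
      ultimately show "y \<in> (\<lambda>x. r *\<^sub>R x + 0) ` (C \<inter> cball 0 1)" by blast
    qed
    show "(\<lambda>x. r *\<^sub>R x + 0) ` (C \<inter> cball 0 1) \<subseteq> C \<inter> cball 0 r"
      using r B(4) by (auto simp: mult_le_cancel_left1)
  qed
  then show ?thesis using measure_lebesgue_affine[of r 0 "C \<inter> cball 0 1"] r by simp
qed

lemma slab:
  fixes C :: "'a::euclidean_space set"
  assumes pc: "pointed_cone C" and a: "a \<in> C" and r: "r > 0"
  shows "emeasure lebesgue ((C - (+) a ` C) \<inter> cball 0 r)
    \<le> ennreal (real DIM('a) * norm a * measure lebesgue (C \<inter> cball 0 1) * r ^ (DIM('a) - 1))"
proof -
  note B = pc_basic[OF pc]
  obtain m where m: "DIM('a) = Suc m" using DIM_positive by (metis Suc_pred)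
  define V1 where "V1 = measure lebesgue (C \<inter> cball 0 1)"
  have V1: "V1 \<ge> 0" by (simp add: V1_def)
  define X where "X = (C - (+) a ` C) \<inter> cball 0 r"
  have clC: "closed C" using B by simp
  have clT: "closed ((+) a ` C)" using closed_translation[OF clC] by simp
  have Xb: "X \<in> sets borel" unfolding X_def using clC clT
    by (intro sets.Int sets.Diff borel_closed) auto
  then have Xl: "X \<in> sets lebesgue" by (simp add: sets_completionI_sets)
  have Cr: "C \<inter> cball 0 r \<in> lmeasurable"
    by (intro lmeasurable_compact closed_Int_compact clC compact_cball)
  have XC: "X \<subseteq> C \<inter> cball 0 r" by (auto simp: X_def)
  have Xf: "X \<in> lmeasurable" using fmeasurableI2[OF Cr XC Xl] .
  have "measure lebesgue X \<le> real DIM('a) * norm a * V1 * r ^ m"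
  proof (cases "r \<le> norm a")
    case True
    have "measure lebesgue X \<le> measure lebesgue (C \<inter> cball 0 r)"
      by (rule measure_mono_fmeasurable[OF XC Xl Cr])
    also have "\<dots> = r * r ^ m * V1" using cone_ball_measure[OF pc r] m by (simp add: V1_def)
    also have "\<dots> \<le> norm a * r ^ m * V1" using True r V1 by (intro mult_right_mono) auto
    also have "\<dots> \<le> real DIM('a) * norm a * V1 * r ^ m" using V1 r m
      by (simp add: mult_right_mono mult_left_mono algebra_simps)
    finally show ?thesis .
  next
    case False
    define \<rho> where "\<rho> = r - norm a"
    have \<rho>: "\<rho> > 0" using False by (simp add: \<rho>_def)
    define Y where "Y = (+) a ` (C \<inter> cball 0 \<rho>)"
    have Cp: "C \<inter> cball 0 \<rho> \<in> lmeasurable"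
      by (intro lmeasurable_compact closed_Int_compact clC compact_cball)
    have Yf: "Y \<in> lmeasurable" unfolding Y_def by (rule measurable_translation[OF Cp])
    have YC: "Y \<subseteq> C \<inter> cball 0 r"
    proof
      fix y assume "y \<in> Y"
      then obtain x where x: "x \<in> C" "norm x \<le> \<rho>" "y = a + x" by (auto simp: Y_def)
      have "norm y \<le> norm a + norm x" using x(3) norm_triangle_ineq by blast
      then show "y \<in> C \<inter> cball 0 r" using x B(3)[OF a x(1)] by (simp add: \<rho>_def)
    qed
    have "X \<subseteq> (C \<inter> cball 0 r) - Y" using XC by (auto simp: X_def Y_def)
    then have "measure lebesgue X \<le> measure lebesgue ((C \<inter> cball 0 r) - Y)"
      using Cr Yf Xl by (intro measure_mono_fmeasurable) (auto intro: fmeasurable_Diff)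
    also have "\<dots> = measure lebesgue (C \<inter> cball 0 r) - measure lebesgue Y"
      using Cr Yf YC by (intro measure_Diff) (auto simp: fmeasurable_def)
    also have "measure lebesgue Y = measure lebesgue (C \<inter> cball 0 \<rho>)"
      unfolding Y_def by (rule measure_translation)
    also have "measure lebesgue (C \<inter> cball 0 r) - measure lebesgue (C \<inter> cball 0 \<rho>)
        = (r ^ Suc m - \<rho> ^ Suc m) * V1"
      using cone_ball_measure[OF pc r] cone_ball_measure[OF pc \<rho>] m by (simp add: V1_def algebra_simps)
    also have "\<dots> \<le> (real (Suc m) * r ^ m * (r - \<rho>)) * V1"
      using pow_diff_le[of \<rho> r m] \<rho> V1 by (intro mult_right_mono) (auto simp: \<rho>_def)
    also have "\<dots> = real DIM('a) * norm a * V1 * r ^ m" using m by (simp add: \<rho>_def)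
    finally show ?thesis .
  qed
  then have "ennreal (measure lebesgue X) \<le> ennreal (real DIM('a) * norm a * V1 * r ^ m)"
    by (rule ennreal_leI)
  then show ?thesis using emeasure_eq_measure2[OF Xf] m by (simp add: X_def V1_def)
qed

lemma layer_cake:
  fixes g :: "'a::euclidean_space \<Rightarrow> real"
  assumes g[measurable]: "g \<in> borel_measurable borel" and nonneg: "\<And>y. g y \<ge> 0"
  shows "(\<integral>\<^sup>+y. ennreal (g y) \<partial>lborel)
     = (\<integral>\<^sup>+s. emeasure lborel {y. s < g y} * indicator {0<..} s \<partial>(lborel::real measure))"
proof -
  have "ennreal (g y) = (\<integral>\<^sup>+s. indicator {0<..<g y} s \<partial>(lborel::real measure))" for y
    using nonneg[of y] by simp
  then have "(\<integral>\<^sup>+y. ennreal (g y) \<partial>lborel)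
      = (\<integral>\<^sup>+y. (\<integral>\<^sup>+s. indicator {p. 0 < snd p \<and> snd p < g (fst p)} (y, s) \<partial>(lborel::real measure)) \<partial>lborel)"
    by (intro nn_integral_cong) (simp add: indicator_def)
  also have "\<dots> = (\<integral>\<^sup>+s. (\<integral>\<^sup>+y. indicator {p. 0 < snd p \<and> snd p < g (fst p)} (y, s) \<partial>lborel) \<partial>(lborel::real measure))"
    by (rule lborel_pair.Fubini'[symmetric]) measurable
  also have "\<dots> = (\<integral>\<^sup>+s. emeasure lborel {y. s < g y} * indicator {0<..} s \<partial>(lborel::real measure))"
  proof (intro nn_integral_cong)
    fix s :: real
    show "(\<integral>\<^sup>+y. indicator {p. 0 < snd p \<and> snd p < g (fst p)} (y, s) \<partial>lborel)
        = emeasure lborel {y. s < g y} * indicator {0<..} s"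
    proof (cases "0 < s")
      case True
      have "(\<integral>\<^sup>+y. indicator {p. 0 < snd p \<and> snd p < g (fst p)} (y, s) \<partial>lborel)
          = (\<integral>\<^sup>+y. indicator {y. s < g y} y \<partial>lborel)"
        using True by (intro nn_integral_cong) (simp add: indicator_def)
      also have "\<dots> = emeasure lborel {y. s < g y}" by (intro nn_integral_indicator) measurable
      finally show ?thesis using True by simp
    next
      case False
      then show ?thesis by (simp add: indicator_def)
    qed
  qed
  finally show ?thesis .
qed



lemma int_bound:
  fixes S :: "'a::euclidean_space set"
  assumes Sb: "S \<in> sets borel" and K1: "K1 \<ge> 0"
    and vol: "\<And>r. r > 0 \<Longrightarrow> emeasure lborel (S \<inter> cball 0 r) \<le> ennreal (K1 * r ^ (DIM('a) - 1))"
    and q: "q > real DIM('a)" and T: "T > 0"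
  shows "(\<integral>\<^sup>+y. ennreal (indicator S y * (T + norm y) powr (-q)) \<partial>lborel)
     \<le> ennreal (K1 * (q / (q - real DIM('a) + 1)) * T powr (real DIM('a) - 1 - q))"
proof -
  define n where "n = DIM('a)"
  have n1: "n \<ge> 1" by (simp add: n_def DIM_positive Suc_leI)
  have q0: "q > 0" using q n1 n_def by linarith
  define g where "g y = indicator S y * (T + norm y) powr (-q)" for y
  define \<alpha> where "\<alpha> = (real n - 1) / q"
  have \<alpha>: "0 \<le> \<alpha>" "\<alpha> < 1" using q q0 n1 by (auto simp: \<alpha>_def n_def field_simps)
  define b where "b = T powr (-q)"
  have b: "b > 0" using T by (simp add: b_def)
  have Sb'[measurable]: "S \<in> sets borel" by (rule Sb)
  have gm: "g \<in> borel_measurable borel" unfolding g_def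
    by (intro borel_measurable_times borel_measurable_indicator Sb borel_measurable_continuous_onI
        continuous_intros) (use T in \<open>smt (verit) norm_ge_zero\<close>)
  have gnn: "\<And>y. g y \<ge> 0" by (simp add: g_def)
  have lc: "(\<integral>\<^sup>+y. ennreal (g y) \<partial>lborel)
     = (\<integral>\<^sup>+s. emeasure lborel {y. s < g y} * indicator {0<..} s \<partial>(lborel::real measure))"
    by (rule layer_cake[OF gm gnn])
  have pt: "emeasure lborel {y. s < g y} * indicator {0<..} s
      \<le> ennreal (indicator {0..b} s * (K1 * s powr (-\<alpha>)))" for s :: real
  proof (cases "0 < s")
    case False then show ?thesis by simp
  next
    case s: True
    show ?thesis
    proof (cases "s \<le> b")
      case False
      have "{y. s < g y} = {}"
      proof -
        have gb: "g y \<le> b" for y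
        proof -
          have "(T + norm y) powr (-q) \<le> T powr (-q)" using T q0
            by (intro powr_mono2') auto
          then show ?thesis by (simp add: g_def b_def indicator_def)
        qed
        have "\<not> s < g y" for y using False gb[of y] by linarith
        then show ?thesis by auto
      qed
      then show ?thesis by simp
    next
      case True
      define r where "r = s powr (-1/q)"
      have r: "r > 0" using s by (simp add: r_def)
      have sub: "{y. s < g y} \<subseteq> S \<inter> cball 0 r"
      proof
        fix y assume "y \<in> {y. s < g y}"
        then have yS: "y \<in> S" and sl: "s < (T + norm y) powr (-q)"
          using s by (cases "y \<in> S"; simp add: g_def)+
        have Tp: "T + norm y > 0" using T by (simp add: add_pos_nonneg)
        have "((T + norm y) powr (-q)) powr (-1/q) < s powr (-1/q)"
          using sl s q0 by (intro powr_less_mono2_neg) auto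
        also have "((T + norm y) powr (-q)) powr (-1/q) = T + norm y"
          using Tp q0 by (simp add: powr_powr)
        finally have "norm y < r" using T by (simp add: r_def)
        then show "y \<in> S \<inter> cball 0 r" using yS by simp
      qed
      have "g -` {s<..} \<inter> space borel \<in> sets borel" by (rule measurable_sets[OF gm]) auto
      then have "{y. s < g y} \<in> sets lborel" by (simp add: vimage_def)
      then have "emeasure lborel {y. s < g y} \<le> emeasure lborel (S \<inter> cball 0 r)"
        using sub Sb by (intro emeasure_mono) auto
      also have "\<dots> \<le> ennreal (K1 * r ^ (n - 1))" using vol[OF r] by (simp add: n_def)
      also have "r ^ (n - 1) = s powr (-\<alpha>)"
      proof -
        have "r ^ (n - 1) = r powr real (n - 1)" using r by (simp add: powr_realpow)
        also have "\<dots> = s powr (-1/q * real (n - 1))" by (simp add: r_def powr_powr)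
        also have "-1/q * real (n - 1) = -\<alpha>" using n1 by (simp add: \<alpha>_def of_nat_diff)
        finally show ?thesis .
      qed
      finally show ?thesis using s True by simp
    qed
  qed
  have hi: "((\<lambda>s. K1 * s powr (-\<alpha>)) has_integral (K1 * (b powr (-\<alpha>+1) / (-\<alpha>+1)))) {0..b}"
    using has_integral_powr_from_0[of "-\<alpha>" b] \<alpha> b by (intro has_integral_mult_right) auto
  have "(\<integral>\<^sup>+s. ennreal (indicator {0..b} s * (K1 * s powr (-\<alpha>))) \<partial>lborel)
      = ennreal (K1 * (b powr (-\<alpha>+1) / (-\<alpha>+1)))"
    using nn_integral_has_integral_lebesgue[OF _ hi] K1 by simp
  moreover have "K1 * (b powr (-\<alpha>+1) / (-\<alpha>+1))
      = K1 * (q / (q - real DIM('a) + 1)) * T powr (real DIM('a) - 1 - q)"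
  proof -
    have "b powr (-\<alpha>+1) = T powr (-q * (-\<alpha>+1))" by (simp add: b_def powr_powr)
    also have "-q * (-\<alpha>+1) = real DIM('a) - 1 - q" using q0 by (simp add: \<alpha>_def n_def field_simps)
    finally have e1: "b powr (-\<alpha>+1) = T powr (real DIM('a) - 1 - q)" .
    have e2: "-\<alpha>+1 = (q - real DIM('a) + 1) / q" using q0 by (simp add: \<alpha>_def n_def field_simps)
    show ?thesis unfolding e1 unfolding e2 by (simp add: divide_divide_eq_right ac_simps)
  qed
  ultimately have "(\<integral>\<^sup>+s. ennreal (indicator {0..b} s * (K1 * s powr (-\<alpha>))) \<partial>lborel)
      = ennreal (K1 * (q / (q - real DIM('a) + 1)) * T powr (real DIM('a) - 1 - q))" by simp
  moreover have "(\<integral>\<^sup>+y. ennreal (g y) \<partial>lborel)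
      \<le> (\<integral>\<^sup>+s. ennreal (indicator {0..b} s * (K1 * s powr (-\<alpha>))) \<partial>lborel)"
    unfolding lc by (intro nn_integral_mono pt)
  ultimately show ?thesis by (simp add: g_def)
qed



lemma nn_integral_lborel_transl:
  fixes f :: "'a::euclidean_space \<Rightarrow> ennreal" and t :: 'a
  assumes f[measurable]: "f \<in> borel_measurable borel"
  shows "(\<integral>\<^sup>+x. f (x - t) \<partial>lborel) = (\<integral>\<^sup>+x. f x \<partial>lborel)"
proof -
  have "(\<integral>\<^sup>+x. f (x - t) \<partial>lborel)
      = (\<integral>\<^sup>+x. f (x - t) \<partial>(density (distr lborel borel (\<lambda>x. t + 1 *\<^sub>R x)) (\<lambda>_. \<bar>1::real\<bar>^DIM('a))))"
    by (subst lborel_affine[of 1 t, symmetric]) simp_all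
  also have "\<dots> = (\<integral>\<^sup>+x. f x \<partial>lborel)"
    by (simp add: nn_integral_density nn_integral_distr)
  finally show ?thesis .
qed

lemma theta_bound:
  fixes C :: "'a::euclidean_space set" and \<Theta> :: "'a \<Rightarrow> real"
  assumes pc: "pointed_cone C"
    and cont: "continuous_on (C - {0}) \<Theta>"
    and pos: "\<And>x. x \<in> C - {0} \<Longrightarrow> \<Theta> x > 0"
    and hom: "\<And>x t. x \<in> C - {0} \<Longrightarrow> t > 0 \<Longrightarrow> \<Theta> (t *\<^sub>R x) = t powr (-q) * \<Theta> x"
  shows "\<exists>K0>0. \<forall>x\<in>C - {0}. \<Theta> x \<le> K0 * norm x powr (-q)"
proof -
  note B = pc_basic[OF pc]
  define S1 where "S1 = C \<inter> sphere 0 1"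
  have cS: "compact S1" unfolding S1_def by (intro closed_Int_compact B compact_sphere)
  obtain p where p: "p \<in> C" "p \<noteq> 0" using pc_nonzero[OF pc] by blast
  have "p /\<^sub>R norm p \<in> S1" using p B(4)[OF p(1), of "1/norm p"]
    by (auto simp: S1_def divide_inverse_commute)
  then have neS: "S1 \<noteq> {}" by blast
  have S1C: "S1 \<subseteq> C - {0}" by (auto simp: S1_def)
  have "continuous_on S1 \<Theta>" using continuous_on_subset[OF cont S1C] .
  from continuous_attains_sup[OF cS neS this] obtain w where w: "w \<in> S1"
    and wmax: "\<And>y. y \<in> S1 \<Longrightarrow> \<Theta> y \<le> \<Theta> w" by blast
  have K0: "\<Theta> w > 0" using pos w S1C by blast
  have "\<Theta> x \<le> \<Theta> w * norm x powr (-q)" if x: "x \<in> C - {0}" for x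
  proof -
    define u where "u = (1 / norm x) *\<^sub>R x"
    have nx: "norm x > 0" using x by simp
    have uS: "u \<in> S1" using x B(4)[of x "1/norm x"] nx by (auto simp: S1_def u_def)
    have "x = norm x *\<^sub>R u" using nx by (simp add: u_def)
    then have "\<Theta> x = \<Theta> (norm x *\<^sub>R u)" by (rule arg_cong[of _ _ \<Theta>])
    also have "\<dots> = norm x powr (-q) * \<Theta> u" using hom[of u "norm x"] uS S1C nx by blast
    also have "\<dots> \<le> norm x powr (-q) * \<Theta> w" using wmax[OF uS] by (intro mult_left_mono) auto
    finally show ?thesis by (simp add: mult.commute)
  qed
  then show ?thesis using K0 by blast
qed

theorem lemma5p5:
  fixes C A :: "'a::euclidean_space set" and \<Theta> :: "'a \<Rightarrow> real" and q :: real and z :: 'a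
  assumes "DIM('a) \<ge> 2"
    and "pointed_cone C"
    and "q > real DIM('a)"
    and "continuous_on (C - {0}) \<Theta>"
    and "\<And>x. x \<in> C - {0} \<Longrightarrow> \<Theta> x > 0"
    and "\<And>x t. x \<in> C - {0} \<Longrightarrow> t > 0 \<Longrightarrow> \<Theta> (t *\<^sub>R x) = t powr (-q) * \<Theta> x"
    and "C_asymptotic C A"
    and "z \<in> C - {0}"
  shows "(\<exists>M>0. \<forall>\<^sub>F t in at_top.
            T_Theta C \<Theta> A (t *\<^sub>R z) \<le> ennreal (M * t powr (real DIM('a) - q - 1)))
      \<and> (\<lambda>t. enn2real (T_Theta C \<Theta> A (t *\<^sub>R z))) \<in> o[at_top](\<lambda>t. t powr (real DIM('a) - q))"
proof -
  note B = pc_basic[OF assms(2)]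
  have q0: "q > 0" using assms(3) by (metis of_nat_0_le_iff order_le_less_trans)
  obtain K0 where K0: "K0 > 0" "\<And>x. x \<in> C - {0} \<Longrightarrow> \<Theta> x \<le> K0 * norm x powr (-q)"
    using theta_bound[OF assms(2,4,5,6)] by blast
  obtain c0 where c0: "c0 > 0" "\<And>u v. u \<in> C \<Longrightarrow> v \<in> C \<Longrightarrow> c0 * (norm u + norm v) \<le> norm (u + v)"
    using pc_c0[OF assms(2)] by blast
  obtain a where a: "(+) a ` C \<subseteq> A" using asym_translate[OF assms(2,7)] by blast
  have AC: "A \<subseteq> C" using assms(7) by (simp add: C_asymptotic_def)
  have "a + 0 \<in> A" using a B(1) by blast
  then have aC: "a \<in> C" using AC by auto
  define S where "S = C - (+) a ` C"
  have clC: "closed C" using B by simp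
  have clT: "closed ((+) a ` C)" using closed_translation[OF clC] by simp
  have Sb: "S \<in> sets borel" unfolding S_def using clC clT
    by (intro sets.Diff borel_closed) auto
  define K1 where "K1 = real DIM('a) * norm a * measure lebesgue (C \<inter> cball 0 1)"
  have K1: "K1 \<ge> 0" by (simp add: K1_def)
  have vol: "emeasure lborel (S \<inter> cball 0 r) \<le> ennreal (K1 * r ^ (DIM('a) - 1))" if r: "r > 0" for r
  proof -
    have "S \<inter> cball 0 r \<in> sets borel" using Sb by auto
    then have "emeasure lborel (S \<inter> cball 0 r) = emeasure lebesgue (S \<inter> cball 0 r)"
      by (simp add: lebesgue_eq_lborel_emeasure)
    also have "\<dots> \<le> ennreal (K1 * r ^ (DIM('a) - 1))"
      using slab[OF assms(2) aC r] by (simp add: S_def K1_def mult.assoc)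
    finally show ?thesis .
  qed
  have zC: "z \<in> C" and z0: "z \<noteq> 0" using assms(8) by auto
  define M0 where "M0 = K0 * c0 powr (-q) * (K1 * (q / (q - real DIM('a) + 1)))
     * norm z powr (real DIM('a) - 1 - q)"
  have bound: "T_Theta C \<Theta> A (t *\<^sub>R z) \<le> ennreal (M0 * t powr (real DIM('a) - q - 1))"
    if t: "t > 0" for t
  proof -
    define T where "T = t * norm z"
    have T: "T > 0" using t z0 by (simp add: T_def)
    define g where "g y = indicator S y * (T + norm y) powr (-q)" for y
    define K where "K = K0 * c0 powr (-q)"
    have K: "K \<ge> 0" using K0 by (simp add: K_def)
    have gm: "g \<in> borel_measurable borel" unfolding g_def
      by (intro borel_measurable_times borel_measurable_indicator Sb borel_measurable_continuous_onI
          continuous_intros) (use T in \<open>smt (verit) norm_ge_zero\<close>)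
    have pt: "indicator ((+) (t *\<^sub>R z) ` C - (+) (t *\<^sub>R z) ` A) x * ennreal (\<Theta> x)
        \<le> ennreal (K * g (x - t *\<^sub>R z))" for x
    proof (cases "x \<in> (+) (t *\<^sub>R z) ` C - (+) (t *\<^sub>R z) ` A")
      case False then show ?thesis by simp
    next
      case True
      then obtain y where y: "y \<in> C" "x = t *\<^sub>R z + y" by auto
      have yA: "y \<notin> A" using True y by auto
      have yS: "y \<in> S" using yA a y by (auto simp: S_def)
      have tzC: "t *\<^sub>R z \<in> C" using B(4)[OF zC] t by simp
      have nx: "norm x \<ge> c0 * (T + norm y)" using c0(2)[OF tzC y(1)] y t by (simp add: T_def)
      have pos: "c0 * (T + norm y) > 0" using c0 T by (simp add: add_pos_nonneg)
      have xC: "x \<in> C - {0}" using B(3)[OF tzC y(1)] y nx pos by auto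
      have "\<Theta> x \<le> K0 * norm x powr (-q)" using K0(2)[OF xC] .
      also have "\<dots> \<le> K0 * (c0 * (T + norm y)) powr (-q)"
        using pos nx K0 q0 by (intro mult_left_mono powr_mono2') auto
      also have "\<dots> = K * g (x - t *\<^sub>R z)"
        using yS y c0 T by (simp add: K_def g_def powr_mult add_pos_nonneg)
      finally have "ennreal (\<Theta> x) \<le> ennreal (K * g (x - t *\<^sub>R z))" by (rule ennreal_leI)
      then show ?thesis using True by simp
    qed
    have "T_Theta C \<Theta> A (t *\<^sub>R z) \<le> (\<integral>\<^sup>+x. ennreal (K * g (x - t *\<^sub>R z)) \<partial>lebesgue)"
      unfolding T_Theta_def by (intro nn_integral_mono pt)
    also have "\<dots> = (\<integral>\<^sup>+x. ennreal (K * g (x - t *\<^sub>R z)) \<partial>lborel)"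
      by (simp add: nn_integral_completion)
    also have "\<dots> = (\<integral>\<^sup>+y. ennreal (K * g y) \<partial>lborel)"
      by (rule nn_integral_lborel_transl[of "\<lambda>y. ennreal (K * g y)"]) (use gm in measurable)
    also have "\<dots> = ennreal K * (\<integral>\<^sup>+y. ennreal (g y) \<partial>lborel)"
    proof -
      have gnn: "g y \<ge> 0" for y by (simp add: g_def)
      have "(\<integral>\<^sup>+y. ennreal (K * g y) \<partial>lborel) = (\<integral>\<^sup>+y. ennreal K * ennreal (g y) \<partial>lborel)"
        using K gnn by (intro nn_integral_cong) (simp add: ennreal_mult)
      also have "\<dots> = ennreal K * (\<integral>\<^sup>+y. ennreal (g y) \<partial>lborel)"
        by (rule nn_integral_cmult) (use gm in measurable)
      finally show ?thesis .
    qed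
    also have "\<dots> \<le> ennreal K * ennreal (K1 * (q / (q - real DIM('a) + 1)) * T powr (real DIM('a) - 1 - q))"
      using int_bound[OF Sb K1 vol assms(3) T] by (intro mult_left_mono) (simp_all add: g_def)
    also have "\<dots> = ennreal (M0 * t powr (real DIM('a) - q - 1))"
    proof -
      have "T powr (real DIM('a) - 1 - q) = t powr (real DIM('a) - q - 1) * norm z powr (real DIM('a) - 1 - q)"
        using t z0 by (simp add: T_def powr_mult diff_diff_eq2 add.commute diff_diff_eq)
      then have e: "K * (K1 * (q / (q - real DIM('a) + 1)) * T powr (real DIM('a) - 1 - q))
          = M0 * t powr (real DIM('a) - q - 1)" by (simp add: M0_def K_def ac_simps)
      show ?thesis unfolding e[symmetric] using K by (simp only: ennreal_mult')
    qed
    finally show ?thesis .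
  qed
  define M where "M = max M0 0 + 1"
  have M: "M > 0" by (simp add: M_def add_nonneg_pos)
  have bound': "T_Theta C \<Theta> A (t *\<^sub>R z) \<le> ennreal (M * t powr (real DIM('a) - q - 1))"
    if t: "t > 0" for t
  proof -
    have "M0 * t powr (real DIM('a) - q - 1) \<le> M * t powr (real DIM('a) - q - 1)"
      by (intro mult_right_mono) (auto simp: M_def)
    then show ?thesis using bound[OF t] by (meson ennreal_leI order_trans)
  qed
  have P1: "\<forall>\<^sub>F t in at_top. T_Theta C \<Theta> A (t *\<^sub>R z) \<le> ennreal (M * t powr (real DIM('a) - q - 1))"
    using eventually_gt_at_top[of "0::real"] by eventually_elim (rule bound')
  have "(\<lambda>t. enn2real (T_Theta C \<Theta> A (t *\<^sub>R z))) \<in> O[at_top](\<lambda>t. t powr (real DIM('a) - q - 1))"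
  proof (rule bigoI)
    show "\<forall>\<^sub>F t in at_top. norm (enn2real (T_Theta C \<Theta> A (t *\<^sub>R z))) \<le> M * norm (t powr (real DIM('a) - q - 1))"
      using eventually_gt_at_top[of "0::real"]
    proof eventually_elim
      case (elim t)
      have "enn2real (T_Theta C \<Theta> A (t *\<^sub>R z)) \<le> M * t powr (real DIM('a) - q - 1)"
        using bound'[OF elim] M by (intro enn2real_leI) auto
      then show ?case by simp
    qed
  qed
  moreover have "(\<lambda>t::real. t powr (real DIM('a) - q - 1)) \<in> o[at_top](\<lambda>t. t powr (real DIM('a) - q))"
    using powr_smallo_iff[of "\<lambda>x::real. x" at_top "real DIM('a) - q - 1" "real DIM('a) - q"]
    by (simp add: filterlim_ident)
  ultimately have P2: "(\<lambda>t. enn2real (T_Theta C \<Theta> A (t *\<^sub>R z))) \<in> o[at_top](\<lambda>t. t powr (real DIM('a) - q))"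
    by (rule landau_o.big_small_trans)
  show ?thesis using P1 P2 M by blast
qed


end
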